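(* $\mathcal{P}_2\subset\mathcal{L}$: if $r$ is a Hermitian symmetric polynomial on $\mathbb{C}^n$ such that for all $z,w\in\mathbb{C}^n$ the matrix $\begin{pmatrix} r(z,\overline z) & r(z,\overline w)\\ r(w,\overline z) & r(w,\overline w)\end{pmatrix}$ is non-negative definite, then $r\ge0$ and $\log r(z,\overline z)$ is plurisubharmonic.
   Context: A Hermitian symmetric polynomial is $r(z,\overline w)=\sum c_{\alpha\beta}z^\alpha\overline w^\beta$ with $c_{\alpha\beta}=\overline{c_{\beta\alpha}}$. $\mathcal{L}$ denotes the set of such $r$ with $r\ge0$ and $\log(r)$ plurisubharmonic. *)

theory Defs
  imports "HOL-Analysis.Analysis"
begin

definition monom_pow :: "complex ^ 'n \<Rightarrow> ('n::finite \<Rightarrow> nat) \<Rightarrow> complex" where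
  "monom_pow z \<alpha> = (\<Prod>i\<in>UNIV. (z $ i) ^ (\<alpha> i))"

text \<open>A Hermitian symmetric polynomial is given by its coefficient function c,
  which must have finite support and satisfy c(alpha,beta) = conj c(beta,alpha).\<close>
definition herm_sym_coeffs :: "(('n::finite \<Rightarrow> nat) \<Rightarrow> ('n \<Rightarrow> nat) \<Rightarrow> complex) \<Rightarrow> bool" where
  "herm_sym_coeffs c \<longleftrightarrow> finite {(\<alpha>, \<beta>). c \<alpha> \<beta> \<noteq> 0} \<and> (\<forall>\<alpha> \<beta>. c \<alpha> \<beta> = cnj (c \<beta> \<alpha>))"

text \<open>hpoly c z w is the value r(z, conj w) = sum c(alpha,beta) z^alpha (conj w)^beta.\<close>
definition hpoly :: "(('n::finite \<Rightarrow> nat) \<Rightarrow> ('n \<Rightarrow> nat) \<Rightarrow> complex) \<Rightarrow> complex ^ 'n \<Rightarrow> complex ^ 'n \<Rightarrow> complex" where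
  "hpoly c z w = (\<Sum>(\<alpha>, \<beta>)\<in>{(\<alpha>, \<beta>). c \<alpha> \<beta> \<noteq> 0}.
       c \<alpha> \<beta> * monom_pow z \<alpha> * monom_pow (\<chi> i. cnj (w $ i)) \<beta>)"

definition nonneg_def_2x2 :: "complex \<Rightarrow> complex \<Rightarrow> complex \<Rightarrow> complex \<Rightarrow> bool" where
  "nonneg_def_2x2 m11 m12 m21 m22 \<longleftrightarrow>
     (\<forall>a b :: complex.
        let q = cnj a * m11 * a + cnj a * m12 * b + cnj b * m21 * a + cnj b * m22 * b
        in Im q = 0 \<and> Re q \<ge> 0)"

definition usc :: "('a::topological_space \<Rightarrow> ereal) \<Rightarrow> bool" where
  "usc u \<longleftrightarrow> (\<forall>c. open {x. u x < c})"

definition circle_mean :: "(complex \<Rightarrow> ereal) \<Rightarrow> complex \<Rightarrow> real \<Rightarrow> ereal" where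
  "circle_mean v a \<rho> =
     (enn2ereal (\<integral>\<^sup>+ \<theta>. e2ennreal (v (a + of_real \<rho> * cis \<theta>)) * indicator {0..2*pi} \<theta> \<partial>lborel)
      - enn2ereal (\<integral>\<^sup>+ \<theta>. e2ennreal (- v (a + of_real \<rho> * cis \<theta>)) * indicator {0..2*pi} \<theta> \<partial>lborel))
     / ereal (2 * pi)"

text \<open>Subharmonic functions on the whole complex plane (values in [-inf, inf), the
  constant -inf allowed): upper semicontinuous with the sub-mean value property.\<close>
definition subharmonic_C :: "(complex \<Rightarrow> ereal) \<Rightarrow> bool" where
  "subharmonic_C v \<longleftrightarrow> usc v \<and> (\<forall>x. v x \<noteq> \<infinity>) \<and>
     (\<forall>a \<rho>. \<rho> > 0 \<longrightarrow> v a \<le> circle_mean v a \<rho>)"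

definition psh :: "(complex ^ 'n::finite \<Rightarrow> ereal) \<Rightarrow> bool" where
  "psh u \<longleftrightarrow> usc u \<and> (\<forall>a b. subharmonic_C (\<lambda>l. u (a + l *s b)))"

definition elog :: "real \<Rightarrow> ereal" where
  "elog x = (if x \<le> 0 then -\<infinity> else ereal (ln x))"

end

theory Submission
  imports Defs "HOL-Complex_Analysis.Complex_Analysis" "HOL-Computational_Algebra.Fundamental_Theorem_Algebra"
begin


lemma mean_value_disc:
  fixes f :: "complex \<Rightarrow> complex"
  assumes "continuous_on (cball 0 1) f" "f holomorphic_on ball 0 1"
  shows "((\<lambda>\<theta>. f (cis \<theta>)) has_integral (of_real (2*pi) * f 0)) {0..2*pi}"
proof -
  have "((\<lambda>u. f u/(u-0)) has_contour_integral (2 * of_real pi * \<i> * f 0)) (circlepath 0 1)"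
    by (rule Cauchy_integral_circlepath) (use assms in auto)
  then have h: "((\<lambda>t. f (0 + 1 * cis t) / (0 + 1 * cis t - 0) * 1 * \<i> * cis t) has_integral (2 * of_real pi * \<i> * f 0)) {0..2*pi}"
    using has_contour_integral_part_circlepath_iff[of 0 "2*pi" "\<lambda>u. f u/(u-0)" _ 0 1] by (simp add: circlepath_def)
  have "((\<lambda>t. \<i> * f (cis t)) has_integral (2 * of_real pi * \<i> * f 0)) {0..2*pi}"
    by (rule has_integral_eq[OF _ h]) (simp add: field_simps)
  then have "((\<lambda>t. (- \<i>) * (\<i> * f (cis t))) has_integral (- \<i>) * (2 * of_real pi * \<i> * f 0)) {0..2*pi}"
    by (rule has_integral_mult_right)
  then show ?thesis by (simp add: algebra_simps)
qed


lemma mean_Ln: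
  fixes q :: complex
  assumes q: "cmod q < 1"
  shows "((\<lambda>\<theta>. ln (cmod (1 - q * cis \<theta>))) has_integral 0) {0..2*pi}"
proof -
  let ?S = "{u. Re (1 - q * u) > 0}"
  have opn: "open ?S"
    by (intro open_halfspace_component_gt open_Collect_less continuous_intros)
  have sub: "cball 0 1 \<subseteq> ?S"
  proof
    fix u :: complex assume "u \<in> cball 0 1"
    then have u: "cmod u \<le> 1" by simp
    have "Re (q*u) \<le> cmod (q*u)" by (rule complex_Re_le_cmod)
    also have "\<dots> = cmod q * cmod u" by (simp add: norm_mult)
    also have "\<dots> \<le> cmod q" using u by (simp add: mult_left_le)
    finally show "u \<in> ?S" using q by simp
  qed
  have hol: "(\<lambda>u. Ln (1 - q * u)) holomorphic_on ?S"
  proof (rule holomorphic_on_Ln')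
    fix u assume "u \<in> ?S"
    then have "Re (1 - q * u) > 0" by simp
    then show "1 - q * u \<notin> \<real>\<^sub>\<le>\<^sub>0" by (simp only: complex_nonpos_Reals_iff) linarith
  qed (intro holomorphic_intros)
  have L: "((\<lambda>\<theta>. Ln (1 - q * cis \<theta>)) has_integral (of_real (2*pi) * Ln (1 - q * 0))) {0..2*pi}"
    apply (rule mean_value_disc[where f="\<lambda>u. Ln (1 - q * u)"])
    using holomorphic_on_imp_continuous_on[OF holomorphic_on_subset[OF hol sub]]
      holomorphic_on_subset[OF hol] sub ball_subset_cball by blast+
  have "((\<lambda>\<theta>. Re (Ln (1 - q * cis \<theta>))) has_integral Re (of_real (2*pi) * Ln (1 - q * 0))) {0..2*pi}"
    using has_integral_linear[OF L bounded_linear_Re] by (simp add: o_def)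
  moreover have "1 - q * cis \<theta> \<noteq> 0" for \<theta>
  proof
    assume "1 - q * cis \<theta> = 0"
    then have "cmod (q * cis \<theta>) = 1" by (metis eq_iff_diff_eq_0 norm_one)
    then show False using q by (simp add: norm_mult)
  qed
  ultimately show ?thesis by simp
qed

abbreviation Mc :: "real measure" where "Mc \<equiv> restrict_space lborel {0..2*pi}"

lemma cont_Mc:
  fixes g :: "real \<Rightarrow> real"
  assumes "continuous_on {0..2*pi} g"
  shows "integrable Mc g" "integral\<^sup>L Mc g = integral {0..2*pi} g"
proof -
  have si: "set_integrable lborel {0..2*pi} g" by (rule borel_integrable_atLeastAtMost'[OF assms])
  then show "integrable Mc g"
    by (subst integrable_restrict_space) (auto simp: set_integrable_def)
  show "integral\<^sup>L Mc g = integral {0..2*pi} g"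
    using set_borel_integral_eq_integral(2)[OF si]
    by (subst integral_restrict_space) (auto simp: set_lebesgue_integral_def)
qed

lemma countable_cis_eq: "countable {\<theta>. cis \<theta> = u}"
proof (cases "\<exists>\<theta>0. cis \<theta>0 = u")
  case False then have "{\<theta>. cis \<theta> = u} = {}" by auto
  then show ?thesis by simp
next
  case True
  then obtain \<theta>0 where t0: "cis \<theta>0 = u" by auto
  have "{\<theta>. cis \<theta> = u} \<subseteq> range (\<lambda>n::int. \<theta>0 + 2*pi * of_int n)"
  proof
    fix \<theta> assume "\<theta> \<in> {\<theta>. cis \<theta> = u}"
    then have "exp (\<i> * of_real \<theta>) = exp (\<i> * of_real \<theta>0)" using t0 by (simp add: cis_conv_exp)
    then obtain n :: int where "\<i> * of_real \<theta> = \<i> * of_real \<theta>0 + of_real (of_int (2*n) * pi) * \<i>"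
      unfolding exp_eq by blast
    then have "Im (\<i> * of_real \<theta>) = Im (\<i> * of_real \<theta>0 + of_real (of_int (2*n) * pi) * \<i>)" by simp
    then have "\<theta> = \<theta>0 + 2*pi * of_int n" by simp
    then show "\<theta> \<in> range (\<lambda>n::int. \<theta>0 + 2*pi * of_int n)" by auto
  qed
  then show ?thesis by (rule countable_subset) simp
qed

lemma AE_circle_avoid:
  fixes a b :: complex
  assumes "\<rho> \<noteq> 0"
  shows "AE \<theta> in Mc. a + of_real \<rho> * cis \<theta> \<noteq> b"
proof -
  have "{\<theta>. a + of_real \<rho> * cis \<theta> = b} = {\<theta>. cis \<theta> = (b - a) / of_real \<rho>}"
    using assms by (auto simp: field_simps)
  then have "countable {\<theta>. a + of_real \<rho> * cis \<theta> = b}" using countable_cis_eq by simp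
  then have "AE \<theta> in lborel. \<theta> \<notin> {\<theta>. a + of_real \<rho> * cis \<theta> = b}"
    by (intro AE_not_in countable_imp_null_set_lborel)
  then show ?thesis
    by (subst AE_restrict_space_iff) auto
qed


lemma Mc_from_HK:
  fixes g :: "real \<Rightarrow> real"
  assumes "continuous_on {0..2*pi} g" "(g has_integral I) {0..2*pi}"
  shows "integrable Mc g" "integral\<^sup>L Mc g = I"
  using cont_Mc[OF assms(1)] assms(2) by (auto simp: integral_unique)

lemma meas_ln_cont:
  fixes g :: "real \<Rightarrow> real"
  assumes "continuous_on UNIV g"
  shows "(\<lambda>\<theta>. ln (g \<theta>)) \<in> borel_measurable Mc"
proof -
  have "g \<in> borel_measurable borel" by (rule borel_measurable_continuous_onI[OF assms])
  then have "g \<in> borel_measurable lborel" by (simp add: measurable_cong_sets[OF sets_lborel refl])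
  then have "g \<in> borel_measurable Mc" by (rule measurable_restrict_space1)
  then show ?thesis by (rule borel_measurable_ln)
qed

lemma K1:
  fixes w :: complex
  assumes "cmod w < \<rho>"
  shows "integrable Mc (\<lambda>\<theta>. ln (cmod (of_real \<rho> * cis \<theta> - w)))"
        "integral\<^sup>L Mc (\<lambda>\<theta>. ln (cmod (of_real \<rho> * cis \<theta> - w))) = 2*pi*ln \<rho>"
proof -
  have rho: "\<rho> > 0" using assms norm_ge_zero[of w] by linarith
  define q where "q = cnj w / of_real \<rho>"
  have q: "cmod q < 1" using assms rho by (simp add: q_def norm_divide)
  have eq: "ln (cmod (of_real \<rho> * cis \<theta> - w)) = ln \<rho> + ln (cmod (1 - q * cis \<theta>))" for \<theta>
  proof -
    define z where "z = 1 - q * cis \<theta>"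
    have "of_real \<rho> * cis \<theta> - w = of_real \<rho> * cis \<theta> * cnj z"
    proof -
      have "cis \<theta> * cis (-\<theta>) = 1" by (simp add: cis_mult)
      then show ?thesis using rho by (simp add: z_def q_def cis_cnj field_simps)
    qed
    then have "cmod (of_real \<rho> * cis \<theta> - w) = \<rho> * cmod z"
      using rho by (simp add: norm_mult)
    then have "cmod (of_real \<rho> * cis \<theta> - w) = \<rho> * cmod (1 - q * cis \<theta>)"
      by (simp add: z_def)
    moreover have "1 - q * cis \<theta> \<noteq> 0"
    proof
      assume "1 - q * cis \<theta> = 0"
      then have "cmod (q * cis \<theta>) = 1" by (metis eq_iff_diff_eq_0 norm_one)
      then show False using q by (simp add: norm_mult)
    qed
    ultimately show ?thesis using rho by (simp add: ln_mult)
  qed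
  have nz: "of_real \<rho> * cis \<theta> - w \<noteq> 0" for \<theta>
  proof
    assume "of_real \<rho> * cis \<theta> - w = 0"
    then have "cmod (of_real \<rho> * cis \<theta>) = cmod w" by simp
    then show False using assms rho by (simp add: norm_mult)
  qed
  have cont: "continuous_on {0..2*pi} (\<lambda>\<theta>. ln (cmod (of_real \<rho> * cis \<theta> - w)))"
    using nz by (intro continuous_intros) auto
  have "((\<lambda>\<theta>. ln \<rho> + ln (cmod (1 - q * cis \<theta>))) has_integral (2*pi*ln \<rho> + 0)) {0..2*pi}"
    by (rule has_integral_add[OF _ mean_Ln[OF q]]) (use has_integral_const_real[of "ln \<rho>" 0 "2*pi"] in simp)
  then have "((\<lambda>\<theta>. ln (cmod (of_real \<rho> * cis \<theta> - w))) has_integral (2*pi*ln \<rho>)) {0..2*pi}"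
    by (simp add: eq)
  from Mc_from_HK[OF cont this] show
    "integrable Mc (\<lambda>\<theta>. ln (cmod (of_real \<rho> * cis \<theta> - w)))"
    "integral\<^sup>L Mc (\<lambda>\<theta>. ln (cmod (of_real \<rho> * cis \<theta> - w))) = 2*pi*ln \<rho>" by auto
qed

lemma K2:
  fixes w :: complex
  assumes "cmod w > \<rho>" "\<rho> > 0"
  shows "integrable Mc (\<lambda>\<theta>. ln (cmod (of_real \<rho> * cis \<theta> - w)))"
        "integral\<^sup>L Mc (\<lambda>\<theta>. ln (cmod (of_real \<rho> * cis \<theta> - w))) = 2*pi*ln (cmod w)"
proof -
  have w0: "w \<noteq> 0" using assms by auto
  define q where "q = of_real \<rho> / w"
  have q: "cmod q < 1" using assms w0 by (simp add: q_def norm_divide)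
  have eq: "ln (cmod (of_real \<rho> * cis \<theta> - w)) = ln (cmod w) + ln (cmod (1 - q * cis \<theta>))" for \<theta>
  proof -
    have "of_real \<rho> * cis \<theta> - w = - w * (1 - q * cis \<theta>)"
      using w0 by (simp add: q_def field_simps)
    then have "cmod (of_real \<rho> * cis \<theta> - w) = cmod w * cmod (1 - q * cis \<theta>)"
      by (simp add: norm_mult)
    moreover have "1 - q * cis \<theta> \<noteq> 0"
    proof
      assume "1 - q * cis \<theta> = 0"
      then have "cmod (q * cis \<theta>) = 1" by (metis eq_iff_diff_eq_0 norm_one)
      then show False using q by (simp add: norm_mult)
    qed
    ultimately show ?thesis using w0 by (simp add: ln_mult)
  qed
  have nz: "of_real \<rho> * cis \<theta> - w \<noteq> 0" for \<theta>
  proof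
    assume "of_real \<rho> * cis \<theta> - w = 0"
    then have "cmod (of_real \<rho> * cis \<theta>) = cmod w" by simp
    then show False using assms by (simp add: norm_mult)
  qed
  have cont: "continuous_on {0..2*pi} (\<lambda>\<theta>. ln (cmod (of_real \<rho> * cis \<theta> - w)))"
    using nz by (intro continuous_intros) auto
  have "((\<lambda>\<theta>. ln (cmod w) + ln (cmod (1 - q * cis \<theta>))) has_integral (2*pi*ln (cmod w) + 0)) {0..2*pi}"
    by (rule has_integral_add[OF _ mean_Ln[OF q]]) (use has_integral_const_real[of "ln (cmod w)" 0 "2*pi"] in simp)
  then have "((\<lambda>\<theta>. ln (cmod (of_real \<rho> * cis \<theta> - w))) has_integral (2*pi*ln (cmod w))) {0..2*pi}"
    by (simp add: eq)
  from Mc_from_HK[OF cont this] show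
    "integrable Mc (\<lambda>\<theta>. ln (cmod (of_real \<rho> * cis \<theta> - w)))"
    "integral\<^sup>L Mc (\<lambda>\<theta>. ln (cmod (of_real \<rho> * cis \<theta> - w))) = 2*pi*ln (cmod w)" by auto
qed

lemma norm_mono_radius:
  fixes w :: complex
  assumes "cmod w = \<rho>" "\<rho> \<ge> 0" "1 \<le> s" "s \<le> t"
  shows "cmod (of_real (s*\<rho>) * cis \<theta> - w) \<le> cmod (of_real (t*\<rho>) * cis \<theta> - w)"
proof -
  define a where "a = Re w"
  define b where "b = Im w"
  define c where "c = cos \<theta>"
  define d where "d = sin \<theta>"
  have cd: "c^2 + d^2 = 1" by (simp add: c_def d_def)
  have ab: "a^2 + b^2 = \<rho>^2" using assms(1) by (simp add: a_def b_def cmod_power2[symmetric])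
  have id: "(a^2+b^2)*(c^2+d^2) - (a*c+b*d)^2 = (a*d - b*c)^2"
    by (simp add: power2_eq_square algebra_simps)
  have "(a*c + b*d)^2 \<le> (a^2+b^2)*(c^2+d^2)"
    using id zero_le_power2[of "a*d - b*c"] by linarith
  then have cs: "(a*c + b*d)^2 \<le> \<rho>^2" using cd ab by simp
  have cs2: "a*c + b*d \<le> \<rho>" by (rule power2_le_imp_le[OF cs assms(2)])
  have e1: "(cmod (of_real (x*\<rho>) * cis \<theta> - w))^2 = x^2*\<rho>^2 - 2*x*\<rho>*(a*c+b*d) + \<rho>^2" for x
  proof -
    have "(cmod (of_real (x*\<rho>) * cis \<theta> - w))^2 = (x*\<rho>*c - a)^2 + (x*\<rho>*d - b)^2"
      by (simp add: cmod_power2 a_def b_def c_def d_def)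
    also have "\<dots> = x^2*\<rho>^2*(c^2+d^2) - 2*x*\<rho>*(a*c+b*d) + (a^2+b^2)"
      by (simp add: power2_eq_square algebra_simps)
    finally show ?thesis using cd ab by simp
  qed
  have m1: "2*(t-s)*\<rho>*(a*c+b*d) \<le> 2*(t-s)*\<rho>*\<rho>"
    using cs2 assms by (intro mult_left_mono) auto
  have "(t-s)*2 \<le> (t-s)*(t+s)" using assms by (intro mult_left_mono) auto
  then have "(t-s)*2*(\<rho>*\<rho>) \<le> (t-s)*(t+s)*(\<rho>*\<rho>)" by (rule mult_right_mono) simp
  then have m2: "2*(t-s)*\<rho>*\<rho> \<le> (t-s)*(t+s)*\<rho>*\<rho>" by (simp add: algebra_simps)
  have a1: "t^2*\<rho>^2 - s^2*\<rho>^2 = (t-s)*(t+s)*\<rho>*\<rho>" by (simp add: power2_eq_square algebra_simps)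
  have a2: "2 * t * \<rho>*(a*c+b*d) - 2 * s * \<rho>*(a*c+b*d) = 2*(t-s)*\<rho>*(a*c+b*d)" by (simp add: algebra_simps)
  have "(cmod (of_real (s*\<rho>) * cis \<theta> - w))^2 \<le> (cmod (of_real (t*\<rho>) * cis \<theta> - w))^2"
    unfolding e1 using m1 m2 a1 a2 by linarith
  then show ?thesis by (rule power2_le_imp_le) simp
qed


lemma K3:
  fixes w :: complex
  assumes "cmod w = \<rho>" "\<rho> > 0"
  shows "integrable Mc (\<lambda>\<theta>. ln (cmod (of_real \<rho> * cis \<theta> - w)))"
        "integral\<^sup>L Mc (\<lambda>\<theta>. ln (cmod (of_real \<rho> * cis \<theta> - w))) = 2*pi*ln \<rho>"
proof -
  define t where "t n = 1 + inverse (real (Suc n))" for n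
  define f where "f n \<theta> = - ln (cmod (of_real (t n * \<rho>) * cis \<theta> - w))" for n \<theta>
  define u where "u \<theta> = - ln (cmod (of_real \<rho> * cis \<theta> - w))" for \<theta>
  have t1: "t n > 1" for n by (simp add: t_def)
  have tS: "t (Suc n) \<le> t n" for n by (simp add: t_def field_simps)
  have lt: "cmod w < t n * \<rho>" for n using t1[of n] assms by simp
  have pos: "cmod (of_real (t n * \<rho>) * cis \<theta> - w) > 0" for n \<theta>
  proof -
    have "of_real (t n * \<rho>) * cis \<theta> - w \<noteq> 0"
    proof
      assume "of_real (t n * \<rho>) * cis \<theta> - w = 0"
      then have "cmod (of_real (t n * \<rho>) * cis \<theta>) = cmod w" by simp
      then show False using lt[of n] t1[of n] assms by (simp add: norm_mult)
    qed
    then show ?thesis by simp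
  qed
  have int: "integrable Mc (f n)" for n
    unfolding f_def using K1(1)[OF lt[of n]] by simp
  have intg: "integral\<^sup>L Mc (f n) = - (2*pi*ln (t n * \<rho>))" for n
    unfolding f_def using K1(2)[OF lt[of n]] by simp
  have mono: "AE \<theta> in Mc. mono (\<lambda>n. f n \<theta>)"
  proof (rule AE_I2)
    fix \<theta>
    show "mono (\<lambda>n. f n \<theta>)"
      unfolding mono_iff_le_Suc
    proof
      fix n
      have "cmod (of_real (t (Suc n) * \<rho>) * cis \<theta> - w) \<le> cmod (of_real (t n * \<rho>) * cis \<theta> - w)"
        by (rule norm_mono_radius) (use assms t1[of "Suc n"] tS[of n] in auto)
      then have "ln (cmod (of_real (t (Suc n) * \<rho>) * cis \<theta> - w)) \<le> ln (cmod (of_real (t n * \<rho>) * cis \<theta> - w))"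
        using pos by simp
      then show "f n \<theta> \<le> f (Suc n) \<theta>" by (simp add: f_def)
    qed
  qed
  have tlim: "t \<longlonglongrightarrow> 1"
    unfolding t_def using tendsto_add[OF tendsto_const LIMSEQ_inverse_real_of_nat, of 1] by simp
  have avoid: "AE \<theta> in Mc. 0 + of_real \<rho> * cis \<theta> \<noteq> w"
    by (rule AE_circle_avoid) (use assms in simp)
  from avoid have lim: "AE \<theta> in Mc. (\<lambda>n. f n \<theta>) \<longlonglongrightarrow> u \<theta>"
  proof eventually_elim
    case (elim \<theta>)
    then have ne: "0 + of_real \<rho> * cis \<theta> \<noteq> w" .
    have L1: "(\<lambda>n. of_real (t n * \<rho>) * cis \<theta> - w) \<longlonglongrightarrow> of_real (1 * \<rho>) * cis \<theta> - w"
      by (intro tendsto_intros tlim)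
    have L2: "(\<lambda>n. cmod (of_real (t n * \<rho>) * cis \<theta> - w)) \<longlonglongrightarrow> cmod (of_real \<rho> * cis \<theta> - w)"
      using tendsto_norm[OF L1] by simp
    have L3: "cmod (of_real \<rho> * cis \<theta> - w) \<noteq> 0" using ne by simp
    show "(\<lambda>n. f n \<theta>) \<longlonglongrightarrow> u \<theta>"
      unfolding f_def u_def by (rule tendsto_minus[OF tendsto_ln[OF L2 L3]])
  qed
  have ilim: "(\<lambda>n. integral\<^sup>L Mc (f n)) \<longlonglongrightarrow> - (2*pi*ln (1 * \<rho>))"
    unfolding intg using assms(2) by (intro tendsto_intros tlim) auto
  have meas: "u \<in> borel_measurable Mc"
  proof -
    have "continuous_on UNIV (\<lambda>\<theta>. cmod (of_real \<rho> * cis \<theta> - w))" by (intro continuous_intros)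
    from meas_ln_cont[OF this] show ?thesis unfolding u_def by (rule borel_measurable_uminus)
  qed
  have iu: "integrable Mc u" and vu: "integral\<^sup>L Mc u = - (2*pi*ln (1 * \<rho>))"
    using integrable_monotone_convergence[OF int mono lim ilim meas]
      integral_monotone_convergence[OF int mono lim ilim meas] by auto
  have eqf: "(\<lambda>\<theta>. ln (cmod (of_real \<rho> * cis \<theta> - w))) = (\<lambda>\<theta>. - u \<theta>)" by (simp add: u_def)
  show "integrable Mc (\<lambda>\<theta>. ln (cmod (of_real \<rho> * cis \<theta> - w)))"
    unfolding eqf using iu by simp
  show "integral\<^sup>L Mc (\<lambda>\<theta>. ln (cmod (of_real \<rho> * cis \<theta> - w))) = 2*pi*ln \<rho>"
    unfolding eqf using vu by simp
qed




lemma factor_mean: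
  fixes w :: complex
  assumes "w \<noteq> 0" "\<rho> > 0"
  shows "integrable Mc (\<lambda>\<theta>. ln (cmod (of_real \<rho> * cis \<theta> - w)))"
        "2*pi*ln (cmod w) \<le> integral\<^sup>L Mc (\<lambda>\<theta>. ln (cmod (of_real \<rho> * cis \<theta> - w)))"
proof -
  consider "cmod w < \<rho>" | "cmod w > \<rho>" | "cmod w = \<rho>" by linarith
  then have "integrable Mc (\<lambda>\<theta>. ln (cmod (of_real \<rho> * cis \<theta> - w))) \<and>
        2*pi*ln (cmod w) \<le> integral\<^sup>L Mc (\<lambda>\<theta>. ln (cmod (of_real \<rho> * cis \<theta> - w)))"
  proof cases
    case 1
    have "ln (cmod w) \<le> ln \<rho>" using 1 assms by simp
    then show ?thesis using K1[OF 1] by simp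
  next
    case 2
    then show ?thesis using K2[OF 2 assms(2)] by simp
  next
    case 3
    then show ?thesis using K3[OF 3 assms(2)] by simp
  qed
  then show "integrable Mc (\<lambda>\<theta>. ln (cmod (of_real \<rho> * cis \<theta> - w)))"
        "2*pi*ln (cmod w) \<le> integral\<^sup>L Mc (\<lambda>\<theta>. ln (cmod (of_real \<rho> * cis \<theta> - w)))" by auto
qed

lemma const_Mc:
  fixes c :: real
  shows "integrable Mc (\<lambda>_. c)" "integral\<^sup>L Mc (\<lambda>_. c) = 2*pi*c"
  using Mc_from_HK[of "\<lambda>_. c" "2*pi*c"] has_integral_const_real[of c 0 "2*pi"] by auto

lemma meas_poly:
  fixes p :: "complex poly"
  shows "(\<lambda>\<theta>. ln (cmod (poly p (a0 + of_real \<rho> * cis \<theta>)))) \<in> borel_measurable Mc"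
  by (rule meas_ln_cont) (intro continuous_intros)

lemma poly_mean:
  fixes p :: "complex poly"
  assumes "\<rho> > 0"
  shows "poly p a0 \<noteq> 0 \<Longrightarrow> integrable Mc (\<lambda>\<theta>. ln (cmod (poly p (a0 + of_real \<rho> * cis \<theta>)))) \<and>
        2*pi*ln (cmod (poly p a0)) \<le> integral\<^sup>L Mc (\<lambda>\<theta>. ln (cmod (poly p (a0 + of_real \<rho> * cis \<theta>))))"
proof (induction p rule: poly_root_induct[where P="\<lambda>_. True"])
  case 0
  then show ?case by simp
next
  case (no_roots p)
  then have nr: "poly p z \<noteq> 0" for z by simp
  then have "constant (poly p)" using fundamental_theorem_of_algebra by blast
  then have pc: "poly p z = poly p a0" for z unfolding constant_def by blast
  have fe: "(\<lambda>\<theta>. ln (cmod (poly p (a0 + of_real \<rho> * cis \<theta>)))) = (\<lambda>_. ln (cmod (poly p a0)))"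
    by (intro ext) (metis pc)
  show ?case unfolding fe
  proof (intro conjI)
    show "integrable Mc (\<lambda>_. ln (cmod (poly p a0)))" by (rule const_Mc(1))
    show "2 * pi * ln (cmod (poly p a0)) \<le> integral\<^sup>L Mc (\<lambda>_. ln (cmod (poly p a0)))"
      by (simp only: const_Mc(2) order_refl)
  qed
next
  case (root a p)
  have ne: "poly p a0 \<noteq> 0" "a - a0 \<noteq> 0" using root.prems by auto
  note IH = root.IH[OF ne(1)]
  have pnz: "p \<noteq> 0" using ne by auto
  have fin: "finite {r. poly p r = 0}" by (rule poly_roots_finite[OF pnz])
  have "AE \<theta> in Mc. \<forall>r\<in>insert a {r. poly p r = 0}. a0 + of_real \<rho> * cis \<theta> \<noteq> r"
    using fin assms by (subst AE_finite_all) (auto intro!: AE_circle_avoid)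
  then have ae: "AE \<theta> in Mc. ln (cmod (poly ([:a, -1:] * p) (a0 + of_real \<rho> * cis \<theta>))) =
       ln (cmod (of_real \<rho> * cis \<theta> - (a - a0))) + ln (cmod (poly p (a0 + of_real \<rho> * cis \<theta>)))"
  proof eventually_elim
    case (elim \<theta>)
    let ?z = "a0 + of_real \<rho> * cis \<theta>"
    have n1: "a - ?z \<noteq> 0" using elim by auto
    have n2: "poly p ?z \<noteq> 0" using elim by auto
    have e: "a - ?z = - (of_real \<rho> * cis \<theta> - (a - a0))" by simp
    have "poly ([:a, -1:] * p) ?z = (a - ?z) * poly p ?z" by (simp add: algebra_simps)
    then have "cmod (poly ([:a, -1:] * p) ?z) = cmod (a - ?z) * cmod (poly p ?z)"
      by (simp only: norm_mult)
    also have "cmod (a - ?z) = cmod (of_real \<rho> * cis \<theta> - (a - a0))"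
      by (simp only: e norm_minus_cancel)
    finally have eq: "cmod (poly ([:a, -1:] * p) ?z) = cmod (of_real \<rho> * cis \<theta> - (a - a0)) * cmod (poly p ?z)" .
    have "cmod (of_real \<rho> * cis \<theta> - (a - a0)) > 0" using n1 e by (metis norm_minus_cancel zero_less_norm_iff)
    moreover have "cmod (poly p ?z) > 0" using n2 by simp
    ultimately show ?case unfolding eq by (simp add: ln_mult)
  qed
  have fm: "integrable Mc (\<lambda>\<theta>. ln (cmod (of_real \<rho> * cis \<theta> - (a - a0))))"
    "2*pi*ln (cmod (a - a0)) \<le> integral\<^sup>L Mc (\<lambda>\<theta>. ln (cmod (of_real \<rho> * cis \<theta> - (a - a0))))"
    using factor_mean[OF ne(2) assms] by auto
  have isum: "integrable Mc (\<lambda>\<theta>. ln (cmod (of_real \<rho> * cis \<theta> - (a - a0))) + ln (cmod (poly p (a0 + of_real \<rho> * cis \<theta>))))"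
    using fm(1) IH by simp
  have i1: "integrable Mc (\<lambda>\<theta>. ln (cmod (poly ([:a, -1:] * p) (a0 + of_real \<rho> * cis \<theta>))))"
    by (rule integrable_cong_AE_imp[OF isum meas_poly]) (use ae in \<open>auto elim: AE_mp\<close>)
  have "integral\<^sup>L Mc (\<lambda>\<theta>. ln (cmod (poly ([:a, -1:] * p) (a0 + of_real \<rho> * cis \<theta>)))) =
        integral\<^sup>L Mc (\<lambda>\<theta>. ln (cmod (of_real \<rho> * cis \<theta> - (a - a0))) + ln (cmod (poly p (a0 + of_real \<rho> * cis \<theta>))))"
    by (rule integral_cong_AE[OF meas_poly borel_measurable_integrable[OF isum] ae])
  also have "\<dots> = integral\<^sup>L Mc (\<lambda>\<theta>. ln (cmod (of_real \<rho> * cis \<theta> - (a - a0)))) + integral\<^sup>L Mc (\<lambda>\<theta>. ln (cmod (poly p (a0 + of_real \<rho> * cis \<theta>))))"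
    using fm(1) IH by (simp add: integral_add)
  finally have v: "integral\<^sup>L Mc (\<lambda>\<theta>. ln (cmod (poly ([:a, -1:] * p) (a0 + of_real \<rho> * cis \<theta>)))) =
     integral\<^sup>L Mc (\<lambda>\<theta>. ln (cmod (of_real \<rho> * cis \<theta> - (a - a0)))) + integral\<^sup>L Mc (\<lambda>\<theta>. ln (cmod (poly p (a0 + of_real \<rho> * cis \<theta>))))" .
  have "poly ([:a, -1:] * p) a0 = (a - a0) * poly p a0" by (simp add: algebra_simps)
  then have "ln (cmod (poly ([:a, -1:] * p) a0)) = ln (cmod (a - a0)) + ln (cmod (poly p a0))"
    using ne by (simp add: norm_mult ln_mult)
  then show ?case using i1 v fm(2) IH by (simp add: algebra_simps)
qed





lemma core:
  fixes R :: "complex \<Rightarrow> real" and h :: "complex poly"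
  assumes contR: "continuous_on UNIV R" and nn: "\<And>z. R z \<ge> 0"
    and hb: "\<And>l. (cmod (poly h l))^2 \<le> R l * R a"
    and ha: "poly h a = of_real (R a)" and Ra: "R a > 0" and rho: "\<rho> > 0"
  shows "ereal (ln (R a)) \<le> circle_mean (\<lambda>l. elog (R l)) a \<rho>"
proof -
  define g where "g = (\<lambda>\<theta>. ln (R (a + of_real \<rho> * cis \<theta>)))"
  define H where "H = (\<lambda>\<theta>. ln (cmod (poly h (a + of_real \<rho> * cis \<theta>))))"
  have ha0: "poly h a \<noteq> 0" using ha Ra by simp
  have cha: "cmod (poly h a) = R a" using ha Ra by simp
  from poly_mean[OF rho ha0] have iH: "integrable Mc H" and mH: "2*pi*ln (R a) \<le> integral\<^sup>L Mc H"
    by (auto simp: H_def cha)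
  have hnz: "h \<noteq> 0" using ha0 by auto
  have fin: "finite {r. poly h r = 0}" by (rule poly_roots_finite[OF hnz])
  have ae0: "AE \<theta> in Mc. poly h (a + of_real \<rho> * cis \<theta>) \<noteq> 0"
  proof -
    have "AE \<theta> in Mc. \<forall>r\<in>{r. poly h r = 0}. a + of_real \<rho> * cis \<theta> \<noteq> r"
      using fin rho by (subst AE_finite_all) (auto intro!: AE_circle_avoid)
    then show ?thesis by eventually_elim auto
  qed
  have contc: "continuous_on UNIV (\<lambda>\<theta>. R (a + of_real \<rho> * cis \<theta>))"
    by (rule continuous_on_compose2[OF contR]) (auto intro!: continuous_intros)
  have gmeas: "g \<in> borel_measurable Mc" unfolding g_def by (rule meas_ln_cont[OF contc])
  have iU: "integrable Mc (\<lambda>\<theta>. R (a + of_real \<rho> * cis \<theta>))"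
    by (rule cont_Mc(1)) (rule continuous_on_subset[OF contc], simp)
  define L where "L = (\<lambda>\<theta>. 2 * H \<theta> - ln (R a))"
  have iL: "integrable Mc L" unfolding L_def using iH const_Mc(1) by auto
  have bounds: "AE \<theta> in Mc. L \<theta> \<le> g \<theta> \<and> g \<theta> \<le> R (a + of_real \<rho> * cis \<theta>) \<and> R (a + of_real \<rho> * cis \<theta>) > 0"
    using ae0
  proof eventually_elim
    case (elim \<theta>)
    let ?z = "a + of_real \<rho> * cis \<theta>"
    have p: "cmod (poly h ?z) > 0" using elim by simp
    have "0 < (cmod (poly h ?z))^2" using p by simp
    also have "\<dots> \<le> R ?z * R a" by (rule hb)
    finally have RzRa: "0 < R ?z * R a" .
    then have Rz: "R ?z > 0" using Ra nn[of ?z] by (simp add: zero_less_mult_iff)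
    have "2 * H \<theta> = ln ((cmod (poly h ?z))^2)" using p by (simp add: H_def ln_realpow)
    also have "\<dots> \<le> ln (R ?z * R a)" using p hb[of ?z] RzRa by simp
    also have "\<dots> = g \<theta> + ln (R a)" using Rz Ra by (simp add: ln_mult g_def)
    finally have "L \<theta> \<le> g \<theta>" by (simp add: L_def)
    moreover have "g \<theta> \<le> R ?z" using ln_le_minus_one[OF Rz] by (simp add: g_def)
    ultimately show ?case using Rz by simp
  qed
  have ig: "integrable Mc g"
  proof (rule Bochner_Integration.integrable_bound[OF _ gmeas])
    show "integrable Mc (\<lambda>\<theta>. \<bar>L \<theta>\<bar> + \<bar>R (a + of_real \<rho> * cis \<theta>)\<bar>)" using iL iU by auto
    show "AE \<theta> in Mc. norm (g \<theta>) \<le> norm (\<bar>L \<theta>\<bar> + \<bar>R (a + of_real \<rho> * cis \<theta>)\<bar>)"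
      using bounds by eventually_elim auto
  qed
  have "integral\<^sup>L Mc L \<le> integral\<^sup>L Mc g"
    by (rule integral_mono_AE[OF iL ig]) (use bounds in \<open>eventually_elim, auto\<close>)
  moreover have "integral\<^sup>L Mc L = 2 * integral\<^sup>L Mc H - 2*pi*ln (R a)"
    unfolding L_def using iH const_Mc by simp
  ultimately have mg: "2*pi*ln (R a) \<le> integral\<^sup>L Mc g" using mH by linarith
  have e1: "(\<integral>\<^sup>+\<theta>. e2ennreal (elog (R (a + of_real \<rho> * cis \<theta>))) * indicator {0..2*pi} \<theta> \<partial>lborel) = (\<integral>\<^sup>+\<theta>. ennreal (g \<theta>) \<partial>Mc)"
  proof -
    have "(\<integral>\<^sup>+\<theta>. e2ennreal (elog (R (a + of_real \<rho> * cis \<theta>))) * indicator {0..2*pi} \<theta> \<partial>lborel) = (\<integral>\<^sup>+\<theta>. e2ennreal (elog (R (a + of_real \<rho> * cis \<theta>))) \<partial>Mc)"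
      by (subst nn_integral_restrict_space) auto
    also have "\<dots> = (\<integral>\<^sup>+\<theta>. ennreal (g \<theta>) \<partial>Mc)"
      by (rule nn_integral_cong_AE) (use bounds in \<open>eventually_elim, simp add: elog_def g_def\<close>)
    finally show ?thesis .
  qed
  have e2: "(\<integral>\<^sup>+\<theta>. e2ennreal (- elog (R (a + of_real \<rho> * cis \<theta>))) * indicator {0..2*pi} \<theta> \<partial>lborel) = (\<integral>\<^sup>+\<theta>. ennreal (- g \<theta>) \<partial>Mc)"
  proof -
    have "(\<integral>\<^sup>+\<theta>. e2ennreal (- elog (R (a + of_real \<rho> * cis \<theta>))) * indicator {0..2*pi} \<theta> \<partial>lborel) = (\<integral>\<^sup>+\<theta>. e2ennreal (- elog (R (a + of_real \<rho> * cis \<theta>))) \<partial>Mc)"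
      by (subst nn_integral_restrict_space) auto
    also have "\<dots> = (\<integral>\<^sup>+\<theta>. ennreal (- g \<theta>) \<partial>Mc)"
      by (rule nn_integral_cong_AE) (use bounds in \<open>eventually_elim, simp add: elog_def g_def\<close>)
    finally show ?thesis .
  qed
  obtain r q where rq: "0 \<le> r" "0 \<le> q" "(\<integral>\<^sup>+x. ennreal (g x) \<partial>Mc) = ennreal r"
      "(\<integral>\<^sup>+x. ennreal (- g x) \<partial>Mc) = ennreal q" "integral\<^sup>L Mc g = r - q"
    using integrableE[OF ig] by metis
  have cm: "circle_mean (\<lambda>l. elog (R l)) a \<rho> = ereal ((r - q) / (2*pi))"
    unfolding circle_mean_def e1 e2 rq(3,4) using rq(1,2) by simp
  have "ln (R a) \<le> (r - q) / (2*pi)"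
    using mg rq(5) by (simp add: pos_le_divide_eq mult.commute)
  then show ?thesis unfolding cm by simp
qed




lemma psd2:
  assumes "nonneg_def_2x2 m11 m12 m21 m22"
  shows "(cmod m12)^2 \<le> Re m11 * Re m22"
proof -
  have q: "Im (cnj a * m11 * a + cnj a * m12 * b + cnj b * m21 * a + cnj b * m22 * b) = 0 \<and>
           Re (cnj a * m11 * a + cnj a * m12 * b + cnj b * m21 * a + cnj b * m22 * b) \<ge> 0" for a b
    using assms unfolding nonneg_def_2x2_def Let_def by blast
  define x where "x = Re m11"
  define y where "y = Re m22"
  have m11: "m11 = of_real x" using q[of 1 0] by (simp add: x_def complex_eq_iff)
  have m22: "m22 = of_real y" using q[of 0 1] by (simp add: y_def complex_eq_iff)
  have x0: "x \<ge> 0" using q[of 1 0] by (simp add: x_def)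
  have y0: "y \<ge> 0" using q[of 0 1] by (simp add: y_def)
  have i1: "Im m12 + Im m21 = 0" using q[of 1 1] m11 m22 by simp
  have i2: "Re m12 - Re m21 = 0" using q[of 1 \<i>] m11 m22 by simp
  have m21: "m21 = cnj m12" using i1 i2 by (simp add: complex_eq_iff)
  define K where "K = (cmod m12)^2"
  have K0: "K \<ge> 0" by (simp add: K_def)
  have Kc: "cnj m12 * m12 = of_real K" by (metis K_def complex_norm_square mult.commute of_real_power)
  have quad: "0 \<le> x* s^2*K + 2* s*t*K + y*t^2" for s t
  proof -
    have "cnj (m12 * of_real s) * m11 * (m12 * of_real s) + cnj (m12 * of_real s) * m12 * of_real t +
          cnj (of_real t) * m21 * (m12 * of_real s) + cnj (of_real t) * m22 * of_real t
        = (of_real x * of_real s^2 + 2 * of_real s * of_real t) * (cnj m12 * m12) + of_real y * of_real t^2"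
      unfolding m11 m21 m22 by (simp add: algebra_simps power2_eq_square)
    also have "\<dots> = of_real (x* s^2*K + 2* s*t*K + y*t^2)" unfolding Kc by (simp add: algebra_simps)
    finally show ?thesis using q[of "m12 * of_real s" "of_real t"] by simp
  qed
  have "K \<le> x * y"
  proof (cases "x > 0")
    case True
    have "0 \<le> x*(-1/x)^2*K + 2*(-1/x)*1*K + y*1^2" by (rule quad)
    also have "\<dots> = y - K/x" using True by (simp add: power2_eq_square field_simps)
    finally show ?thesis using True by (simp add: field_simps)
  next
    case False
    then have x: "x = 0" using x0 by simp
    show ?thesis
    proof (rule ccontr)
      assume "\<not> K \<le> x * y"
      then have Kp: "K > 0" using x by simp
      have "0 \<le> x*(-(y+1)/(2*K))^2*K + 2*(-(y+1)/(2*K))*1*K + y*1^2" by (rule quad)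
      also have "\<dots> = -1" using Kp x by (simp add: field_simps)
      finally show False by simp
    qed
  qed
  then show ?thesis by (simp add: K_def x_def y_def)
qed





lemma hpoly_line_poly: "\<exists>P. \<forall>l. hpoly c (A + l *s B) W = poly P l"
proof -
  define K where "K \<beta> = monom_pow (\<chi> i. cnj (W $ i)) \<beta>" for \<beta>
  define Q where "Q \<alpha> = (\<Prod>i\<in>UNIV. [:A$i, B$i:] ^ \<alpha> i)" for \<alpha>
  define S where "S = {p. c (fst p) (snd p) \<noteq> 0}"
  define P where "P = (\<Sum>p\<in>S. smult (c (fst p) (snd p) * K (snd p)) (Q (fst p)))"
  have m: "monom_pow (A + l *s B) \<alpha> = poly (Q \<alpha>) l" for \<alpha> l
  proof -
    have "poly (Q \<alpha>) l = (\<Prod>i\<in>UNIV. (poly [:A$i, B$i:] l) ^ \<alpha> i)"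
      unfolding Q_def by (simp only: poly_prod poly_power)
    also have "\<dots> = (\<Prod>i\<in>UNIV. ((A + l *s B) $ i) ^ \<alpha> i)"
      by (intro prod.cong refl) (simp add: mult.commute)
    finally show ?thesis by (simp add: monom_pow_def)
  qed
  have "hpoly c (A + l *s B) W = poly P l" for l
  proof -
    have "hpoly c (A + l *s B) W = (\<Sum>p\<in>S. c (fst p) (snd p) * K (snd p) * poly (Q (fst p)) l)"
      unfolding hpoly_def case_prod_unfold S_def
      by (intro sum.cong refl) (simp add: m K_def mult_ac)
    also have "\<dots> = poly P l"
      unfolding P_def S_def by (simp only: poly_sum poly_smult)
    finally show ?thesis .
  qed
  then show ?thesis by blast
qed



lemma cont_hpoly:
  assumes "continuous_on S f" "continuous_on S g"
  shows "continuous_on S (\<lambda>x. hpoly c (f x) (g x))"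
  unfolding hpoly_def monom_pow_def case_prod_unfold
  by (intro continuous_intros assms)




lemma usc_elog:
  fixes F :: "'a::topological_space \<Rightarrow> real"
  assumes "continuous_on UNIV F"
  shows "usc (\<lambda>x. elog (F x))"
  unfolding usc_def
proof
  fix c :: ereal
  show "open {x. elog (F x) < c}"
  proof (cases c)
    case (real r)
    have "elog (F x) < c \<longleftrightarrow> F x < exp r" for x
    proof (cases "F x \<le> 0")
      case True
      then show ?thesis using real by (simp add: elog_def) (smt (verit) exp_gt_zero)
    next
      case False
      then have "ln (F x) < r \<longleftrightarrow> F x < exp r" by (metis exp_less_cancel_iff exp_ln not_le)
      then show ?thesis using real False by (simp add: elog_def)
    qed
    then have "{x. elog (F x) < c} = {x. F x < exp r}" by blast
    also have "open \<dots>" by (intro open_Collect_less continuous_intros assms)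
    finally show ?thesis .
  next
    case PInf
    then have "{x. elog (F x) < c} = UNIV" by (auto simp: elog_def)
    then show ?thesis by simp
  next
    case MInf
    then have "{x. elog (F x) < c} = {}" by (auto simp: elog_def)
    then show ?thesis by simp
  qed
qed



theorem lemma7p2:
  fixes c :: "('n::finite \<Rightarrow> nat) \<Rightarrow> ('n \<Rightarrow> nat) \<Rightarrow> complex"
  assumes "herm_sym_coeffs c"
    and "\<forall>z w. nonneg_def_2x2 (hpoly c z z) (hpoly c z w) (hpoly c w z) (hpoly c w w)"
  shows "(\<forall>z. Im (hpoly c z z) = 0 \<and> Re (hpoly c z z) \<ge> 0)
         \<and> psh (\<lambda>z. elog (Re (hpoly c z z)))"
proof -
  have diag: "Im (hpoly c z z) = 0 \<and> Re (hpoly c z z) \<ge> 0" for z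
  proof -
    from assms(2) have "nonneg_def_2x2 (hpoly c z z) (hpoly c z z) (hpoly c z z) (hpoly c z z)" by blast
    then have "let q = cnj 1 * hpoly c z z * 1 + cnj 1 * hpoly c z z * 0 + cnj 0 * hpoly c z z * 1 + cnj 0 * hpoly c z z * 0
        in Im q = 0 \<and> Re q \<ge> 0" unfolding nonneg_def_2x2_def by blast
    then show ?thesis by (simp add: Let_def)
  qed
  have bnd: "(cmod (hpoly c z w))^2 \<le> Re (hpoly c z z) * Re (hpoly c w w)" for z w
    using psd2 assms(2) by blast
  have contF: "continuous_on UNIV (\<lambda>z::complex^'n. Re (hpoly c z z))"
    by (intro continuous_intros cont_hpoly)
  have sub: "subharmonic_C (\<lambda>l. elog (Re (hpoly c (A + l *s B) (A + l *s B))))" for A B :: "complex^'n"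
  proof -
    define R where "R l = Re (hpoly c (A + l *s B) (A + l *s B))" for l
    have lin: "(\<lambda>l. A + l *s B) = (\<lambda>l. \<chi> i. A $ i + l * B $ i)" by (auto simp: vec_eq_iff)
    have contl: "continuous_on UNIV (\<lambda>l. A + l *s B)" unfolding lin by (intro continuous_intros)
    have contR: "continuous_on UNIV R" unfolding R_def by (intro continuous_intros cont_hpoly contl)
    have nn: "R l \<ge> 0" for l using diag by (simp add: R_def)
    have "\<forall>a \<rho>. \<rho> > 0 \<longrightarrow> elog (R a) \<le> circle_mean (\<lambda>l. elog (R l)) a \<rho>"
    proof (intro allI impI)
      fix a :: complex and \<rho> :: real
      assume rho: "\<rho> > 0"
      show "elog (R a) \<le> circle_mean (\<lambda>l. elog (R l)) a \<rho>"
      proof (cases "R a = 0")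
        case True then show ?thesis by (simp add: elog_def)
      next
        case False
        then have Ra: "R a > 0" using nn[of a] by simp
        obtain P where P: "\<And>l. hpoly c (A + l *s B) (A + a *s B) = poly P l"
          using hpoly_line_poly by metis
        have hb: "(cmod (poly P l))^2 \<le> R l * R a" for l
          using bnd[of "A + l *s B" "A + a *s B"] by (simp add: P[symmetric] R_def)
        have ha: "poly P a = of_real (R a)"
          using diag[of "A + a *s B"] by (simp add: P[symmetric] R_def complex_eq_iff)
        have "ereal (ln (R a)) \<le> circle_mean (\<lambda>l. elog (R l)) a \<rho>"
          by (rule core[OF contR nn hb ha Ra rho])
        then show ?thesis using Ra by (simp add: elog_def)
      qed
    qed
    moreover have "usc (\<lambda>l. elog (R l))" by (rule usc_elog[OF contR])
    moreover have "elog (R x) \<noteq> \<infinity>" for x by (simp add: elog_def)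
    ultimately show ?thesis unfolding subharmonic_C_def R_def by blast
  qed
  show ?thesis
    unfolding psh_def using diag usc_elog[OF contF] sub by blast
qed

end
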